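(* Let $T$ be a real random variable with characteristic function $\Phi(\omega)=\mathbb E[e^{i\omega T}]$. Then for all real $\omega\neq 0$, $$\mathrm{cost}(T)=\langle|T|\rangle\ \ge\ \frac{1-|\Phi(\omega)|}{|\omega|}.$$
   Context: $\langle|T|\rangle=\mathbb E|T|$ denotes the expected absolute value of $T$ (possibly infinite). *)

theory Defs
  imports "HOL-Probability.Probability"
begin

end

theory Submission
  imports Defs
begin

theorem theorem2:
  fixes M :: "'a measure" and T :: "'a \<Rightarrow> real" and \<omega> :: real
  assumes "prob_space M"
    and "T \<in> borel_measurable M"
    and "\<omega> \<noteq> 0"
  shows "ennreal ((1 - cmod (char (distr M borel T) \<omega>)) / \<bar>\<omega>\<bar>)
           \<le> (\<integral>\<^sup>+ x. ennreal \<bar>T x\<bar> \<partial>M)"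
proof -
  interpret prob_space M by fact
  have Tm[measurable]: "T \<in> borel_measurable M" by fact
  define f where "f x = 1 - iexp (\<omega> * T x)" for x
  have fm[measurable]: "f \<in> borel_measurable M" unfolding f_def by measurable
  have intf: "integrable M f"
    by (rule integrable_const_bound[where B=2]) (use norm_triangle_ineq4[of 1 "iexp (\<omega> * T x)" for x] in \<open>auto simp: f_def\<close>)
  have intc: "integrable M (\<lambda>x. iexp (\<omega> * T x))"
    by (rule integrable_const_bound[where B=1]) auto
  have phi: "char (distr M borel T) \<omega> = (CLINT x|M. iexp (\<omega> * T x))"
    by (simp add: char_def integral_distr)
  have "1 - char (distr M borel T) \<omega> = integral\<^sup>L M f"
    unfolding phi f_def using intc by (simp add: prob_space)
  then have "ennreal (cmod (1 - char (distr M borel T) \<omega>)) \<le> (\<integral>\<^sup>+x. norm (f x) \<partial>M)"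
    using integral_norm_bound_ennreal[OF intf] by simp
  also have "\<dots> \<le> (\<integral>\<^sup>+x. ennreal (\<bar>\<omega>\<bar> * \<bar>T x\<bar>) \<partial>M)"
  proof (rule nn_integral_mono)
    fix x
    have "cmod (iexp (\<omega> * T x) - (\<Sum>k \<le> 0. (\<i> * (\<omega> * T x))^k / fact k)) \<le> \<bar>\<omega> * T x\<bar>^(Suc 0) / fact (Suc 0)"
      by (rule iexp_approx1)
    then have "cmod (f x) \<le> \<bar>\<omega>\<bar> * \<bar>T x\<bar>"
      by (simp add: f_def norm_minus_commute abs_mult)
    then show "ennreal (norm (f x)) \<le> ennreal (\<bar>\<omega>\<bar> * \<bar>T x\<bar>)" by (simp add: ennreal_leI)
  qed
  also have "\<dots> = ennreal \<bar>\<omega>\<bar> * (\<integral>\<^sup>+x. ennreal \<bar>T x\<bar> \<partial>M)"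
    by (simp add: ennreal_mult nn_integral_cmult)
  finally have key: "ennreal (cmod (1 - char (distr M borel T) \<omega>)) \<le> ennreal \<bar>\<omega>\<bar> * (\<integral>\<^sup>+x. ennreal \<bar>T x\<bar> \<partial>M)" .
  have "1 - cmod (char (distr M borel T) \<omega>) \<le> cmod (1 - char (distr M borel T) \<omega>)"
    by (metis norm_one norm_triangle_ineq2)
  then have "ennreal ((1 - cmod (char (distr M borel T) \<omega>)) / \<bar>\<omega>\<bar>) \<le> ennreal (cmod (1 - char (distr M borel T) \<omega>) / \<bar>\<omega>\<bar>)"
    using assms(3) by (intro ennreal_leI divide_right_mono) auto
  also have "\<dots> = ennreal (cmod (1 - char (distr M borel T) \<omega>)) / ennreal \<bar>\<omega>\<bar>"
    using assms(3) by (simp add: divide_ennreal)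
  also have "\<dots> \<le> (\<integral>\<^sup>+x. ennreal \<bar>T x\<bar> \<partial>M)"
    using key assms(3) by (subst divide_le_posI_ennreal) (auto simp: mult.commute)
  finally show ?thesis .
qed

end
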